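(* For every $q=2^l$ with $l\ge3$ there is a quantum CSS code over $\mathbb F_q$ of length $n=3q/4$, dimension $q/4$ and distance at least $\lfloor q/3\rfloor-q/4+1$, together with an orthonormal basis $\{|\bar x\rangle: x\in\mathbb F_q^{q/4}\}$ of its code space, such that for all $x,y,z\in\mathbb F_q^{q/4}$, $$\big(\mathsf{CCZ}^{(q)}\big)^{\otimes n}|\bar x\rangle|\bar y\rangle|\bar z\rangle=(-1)^{\mathrm{tr}\left(\sum_{i=1}^{q/4}x_iy_iz_i\right)}|\bar x\rangle|\bar y\rangle|\bar z\rangle,$$ i.e. transversal $\mathsf{CCZ}^{(q)}$ acts as $(\overline{\mathsf{CCZ}^{(q)}})^{\otimes q/4}$ on the logical qudits.
   Context: A qudit has Hilbert space $\mathbb C^q$ with basis $\{|x\rangle:x\in\mathbb F_q\}$. $\mathrm{tr}:\mathbb F_q\to\mathbb F_2$ is $\mathrm{tr}(x)=\sum_{i=0}^{l-1}x^{2^i}$ and $\mathsf{CCZ}^{(q)}|x\rangle|y\rangle|z\rangle=(-1)^{\mathrm{tr}(xyz)}|x\rangle|y\rangle|z\rangle$; $(\mathsf{CCZ}^{(q)})^{\otimes n}$ acts on three code blocks, coordinatewise. For linear codes $C_2^\perp\subseteq C_1\subseteq\mathbb F_q^n$, the CSS code $\mathrm{CSS}(C_1,C_2)$ is spanned by $\sum_{\alpha\in C_2^\perp}|c+\alpha\rangle$, $c\in C_1$, has dimension $\dim C_1-\dim C_2^\perp$ and distance equal to the minimum Hamming weight of $(C_1\setminus C_2^\perp)\cup(C_2\setminus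 C_1^\perp)$, with $\perp$ taken for the bilinear form $\sum_i u_iv_i$. *)

theory Defs
  imports "HOL-Analysis.Analysis"
begin

text \<open>Absolute trace F_q \<rightarrow> F_2 for q = 2^l, tr(x) = sum_{i<l} x^(2^i); its value lies in the
  prime field {0,1} of the field.\<close>
definition ftr :: "nat \<Rightarrow> 'a::field \<Rightarrow> 'a" where
  "ftr l x = (\<Sum>i<l. x ^ (2 ^ i))"

text \<open>(-1)^t for t in F_2 (embedded in F_q as 0 or 1).\<close>
definition sign_of :: "'a::field \<Rightarrow> complex" where
  "sign_of t = (if t = 0 then 1 else -1)"

definition bil :: "'a::field ^ 'n \<Rightarrow> 'a ^ 'n \<Rightarrow> 'a" where
  "bil u v = (\<Sum>i\<in>UNIV. u $ i * v $ i)"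

definition dual_code :: "('a::field ^ 'n) set \<Rightarrow> ('a ^ 'n) set" where
  "dual_code C = {u. \<forall>v\<in>C. bil u v = 0}"

definition hweight :: "'a::zero ^ 'n \<Rightarrow> nat" where
  "hweight v = card {i. v $ i \<noteq> 0}"

text \<open>States of n qudits: functions F_q^n \<Rightarrow> C (coefficients in the computational basis).\<close>
definition ket :: "'b \<Rightarrow> ('b \<Rightarrow> complex)" where
  "ket b = (\<lambda>v. if v = b then 1 else 0)"

definition inner_st :: "('b::finite \<Rightarrow> complex) \<Rightarrow> ('b \<Rightarrow> complex) \<Rightarrow> complex" where
  "inner_st \<psi> \<phi> = (\<Sum>v\<in>UNIV. cnj (\<psi> v) * \<phi> v)"

definition coset_state :: "('a::field ^ 'n) set \<Rightarrow> 'a ^ 'n \<Rightarrow> ('a ^ 'n \<Rightarrow> complex)" where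
  "coset_state D c = (\<lambda>v. \<Sum>\<alpha>\<in>D. ket (c + \<alpha>) v)"

definition css_space :: "('a::{field,finite} ^ 'n) set \<Rightarrow> ('a ^ 'n) set \<Rightarrow> ('a ^ 'n \<Rightarrow> complex) set" where
  "css_space C1 C2 = {\<lambda>v. \<Sum>c\<in>C1. f c * coset_state (dual_code C2) c v | f. True}"

definition tensor3 :: "('b \<Rightarrow> complex) \<Rightarrow> ('b \<Rightarrow> complex) \<Rightarrow> ('b \<Rightarrow> complex) \<Rightarrow> ('b \<times> 'b \<times> 'b \<Rightarrow> complex)" where
  "tensor3 a b c = (\<lambda>(u, v, w). a u * b v * c w)"

definition transversal_CCZ :: "nat \<Rightarrow> (('a::field ^ 'n) \<times> ('a ^ 'n) \<times> ('a ^ 'n) \<Rightarrow> complex)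
    \<Rightarrow> (('a ^ 'n) \<times> ('a ^ 'n) \<times> ('a ^ 'n) \<Rightarrow> complex)" where
  "transversal_CCZ l \<Psi> = (\<lambda>(u, v, w).
     (\<Prod>i\<in>UNIV. sign_of (ftr l (u $ i * v $ i * w $ i))) * \<Psi> (u, v, w))"

end

theory Submission
  imports Defs "HOL-Computational_Algebra.Polynomial"
begin


lemma ff_card_zero: "of_nat CARD('a::{field,finite}) = (0::'a)"
proof -
  have "(\<Sum>a\<in>UNIV. a + 1) = (\<Sum>a\<in>UNIV. (a::'a))"
    by (rule sum.reindex_bij_witness[of _ "\<lambda>a. a - 1" "\<lambda>a. a + 1"]) auto
  then show ?thesis by (simp add: sum.distrib)
qed

lemma ff_pow_card_minus1:
  fixes x :: "'a::{field,finite}"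
  assumes "x \<noteq> 0" shows "x ^ (CARD('a) - 1) = 1"
proof -
  have "(\<Prod>a\<in>UNIV-{0}. x * a) = (\<Prod>a\<in>UNIV-{0}. a)"
    by (rule prod.reindex_bij_witness[of _ "\<lambda>a. a / x" "\<lambda>a. x * a"]) (use assms in auto)
  moreover have "(\<Prod>a\<in>UNIV-{0}. x * a) = x ^ card (UNIV - {0::'a}) * (\<Prod>a\<in>UNIV-{0}. a)"
    by (simp add: prod.distrib)
  moreover have "card (UNIV - {0::'a}) = CARD('a) - 1" by (simp add: card_Diff_singleton)
  moreover have "(\<Prod>a\<in>UNIV-{0::'a}. a) \<noteq> 0" by simp
  ultimately show ?thesis by (metis mult_cancel_right2)
qed

lemma ff_pow_card:
  fixes x :: "'a::{field,finite}"
  shows "x ^ CARD('a) = x"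
proof (cases "x = 0")
  case True then show ?thesis by simp
next
  case False
  have "CARD('a) = Suc (CARD('a) - 1)" using finite_UNIV_card_ge_0[where 'a='a] by simp
  then have "x ^ CARD('a) = x * x ^ (CARD('a) - 1)" by (metis power_Suc)
  then show ?thesis using ff_pow_card_minus1[OF False] by simp
qed

lemma ff_card_ge2: "CARD('a::{field,finite}) \<ge> 2"
proof -
  have "{0::'a, 1} \<subseteq> UNIV" by simp
  then have "card {0::'a,1} \<le> CARD('a)" by (intro card_mono) auto
  then show ?thesis by simp
qed

lemma ff_sum_pow_zero:
  fixes dummy :: "'a::{field,finite}"
  assumes "e \<le> CARD('a) - 2"
  shows "(\<Sum>a\<in>UNIV. a ^ e) = (0::'a)"
proof (cases "e = 0")
  case True then show ?thesis using ff_card_zero[where 'a='a] by simp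
next
  case False
  define p :: "'a poly" where "p = monom 1 e + [:-1:]"
  have pv: "poly p x = x ^ e - 1" for x by (simp add: p_def poly_monom)
  have dp: "degree p = e" unfolding p_def using False
    by (subst degree_add_eq_left) (auto simp: degree_monom_eq)
  have "p \<noteq> 0" using dp False by auto
  then have cr: "card {x. poly p x = 0} \<le> e" using card_poly_roots_bound dp by metis
  have "\<exists>b::'a. b \<noteq> 0 \<and> b ^ e \<noteq> 1"
  proof (rule ccontr)
    assume "\<not> ?thesis"
    then have "UNIV - {0} \<subseteq> {x::'a. poly p x = 0}" by (auto simp: pv)
    then have "card (UNIV - {0::'a}) \<le> card {x. poly p x = 0}"
      by (intro card_mono) auto
    then have "CARD('a) - 1 \<le> e" using cr by (simp add: card_Diff_singleton)
    then show False using assms ff_card_ge2[where 'a='a] by linarith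
  qed
  then obtain b :: 'a where b: "b \<noteq> 0" "b ^ e \<noteq> 1" by blast
  have "(\<Sum>a\<in>UNIV. (b * a) ^ e) = (\<Sum>a\<in>UNIV. a ^ e)"
    by (rule sum.reindex_bij_witness[of _ "\<lambda>a. a / b" "\<lambda>a. b * a"]) (use b in auto)
  then have "b ^ e * (\<Sum>a\<in>UNIV. a ^ e) = (\<Sum>a\<in>UNIV. a ^ e)"
    by (simp add: power_mult_distrib sum_distrib_left)
  then have "(b ^ e - 1) * (\<Sum>a\<in>UNIV. a ^ e) = 0" by (simp add: algebra_simps)
  then show ?thesis using b by simp
qed

lemma ff_sum_pow_qm1:
  shows "(\<Sum>a\<in>UNIV. a ^ (CARD('a) - 1)) = (-1::'a::{field,finite})"
proof -
  have pw: "(a::'a) ^ (CARD('a) - 1) = (if a = 0 then 0 else 1)" for a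
    using ff_pow_card_minus1[of a] ff_card_ge2[where 'a='a] by (auto simp: power_0_left)
  have "(\<Sum>a\<in>UNIV. (a::'a) ^ (CARD('a) - 1)) = (\<Sum>a\<in>UNIV. if (a::'a) = 0 then 0 else (1::'a))"
    by (simp only: pw)
  also have "\<dots> = of_nat (card (UNIV - {0::'a}))"
    by (simp add: sum.If_cases Int_def Diff_eq Compl_eq)
  also have "\<dots> = of_nat (CARD('a)) - 1" 
    using ff_card_ge2[where 'a='a] by (simp add: card_Diff_singleton of_nat_diff)
  finally show ?thesis using ff_card_zero[where 'a='a] by simp
qed

lemma poly_altdef_le:
  fixes p :: "'a::comm_ring_1 poly"
  assumes "degree p \<le> N"
  shows "poly p x = (\<Sum>i\<le>N. coeff p i * x ^ i)"
proof -
  have "poly p x = poly (\<Sum>i\<le>N. monom (coeff p i) i) x"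
    using poly_as_sum_of_monoms'[OF assms] by simp
  then show ?thesis by (simp add: poly_sum poly_monom)
qed

lemma ff_sum_pow_range:
  assumes "e \<le> 2 * CARD('a) - 3"
  shows "(\<Sum>a\<in>UNIV. a ^ e) = (if e = CARD('a) - 1 then -1 else (0::'a::{field,finite}))"
proof -
  have q2: "CARD('a) \<ge> 2" by (rule ff_card_ge2)
  consider "e \<le> CARD('a) - 2" | "e = CARD('a) - 1" | "e \<ge> CARD('a)" by linarith
  then show ?thesis
  proof cases
    case 1 then show ?thesis using ff_sum_pow_zero[where 'a='a, OF 1] q2 by auto
  next
    case 2 then show ?thesis using ff_sum_pow_qm1[where 'a='a] by simp
  next
    case 3
    have pw: "(a::'a) ^ e = a ^ (e - (CARD('a) - 1))" for a
    proof (cases "a = 0")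
      case True then show ?thesis using 3 q2 by (simp add: power_0_left)
    next
      case False
      have "a ^ e = a ^ (CARD('a) - 1) * a ^ (e - (CARD('a) - 1))"
        using 3 by (simp flip: power_add)
      then show ?thesis using ff_pow_card_minus1[OF False] by simp
    qed
    have "(\<Sum>a\<in>UNIV. (a::'a) ^ e) = (\<Sum>a\<in>UNIV. a ^ (e - (CARD('a) - 1)))"
      by (simp only: pw)
    also have "\<dots> = 0" using assms 3 q2 by (intro ff_sum_pow_zero) linarith
    finally show ?thesis using 3 q2 by simp
  qed
qed

lemma poly_sum_UNIV_zero:
  fixes r :: "'a::{field,finite} poly"
  assumes "degree r \<le> CARD('a) - 2"
  shows "(\<Sum>a\<in>UNIV. poly r a) = 0"
proof -
  have "(\<Sum>a\<in>UNIV. poly r a) = (\<Sum>a\<in>UNIV. \<Sum>i\<le>degree r. coeff r i * a ^ i)"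
    by (simp add: poly_altdef)
  also have "\<dots> = (\<Sum>i\<le>degree r. coeff r i * (\<Sum>a\<in>UNIV. a ^ i))"
    by (subst sum.swap) (simp add: sum_distrib_left)
  also have "\<dots> = 0"
    using assms by (intro sum.neutral) (auto intro!: ff_sum_pow_zero)
  finally show ?thesis .
qed




lemma poly_coeff_extract:
  fixes G :: "'a::{field,finite} poly"
  assumes "degree G \<le> CARD('a) - 1" "j \<le> CARD('a) - 2"
  shows "(\<Sum>a\<in>UNIV. poly G a * a ^ j) = - coeff G (CARD('a) - 1 - j)"
proof -
  have q2: "CARD('a) \<ge> 2" by (rule ff_card_ge2)
  have pe: "poly G a * a ^ j = (\<Sum>i\<le>CARD('a) - 1. coeff G i * a ^ i * a ^ j)" for a
    unfolding poly_altdef_le[OF assms(1), of a] by (rule sum_distrib_right)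
  have "(\<Sum>a\<in>UNIV. poly G a * a ^ j) = (\<Sum>a\<in>UNIV. \<Sum>i\<le>CARD('a) - 1. coeff G i * a ^ i * a ^ j)"
    by (simp only: pe)
  also have "\<dots> = (\<Sum>i\<le>CARD('a) - 1. coeff G i * (\<Sum>a\<in>UNIV. a ^ (i + j)))"
    by (subst sum.swap) (simp add: sum_distrib_left power_add mult.assoc)
  also have "\<dots> = (\<Sum>i\<le>CARD('a) - 1. if i = CARD('a) - 1 - j then - coeff G i else 0)"
  proof (rule sum.cong[OF refl])
    fix i assume "i \<in> {..CARD('a) - 1}"
    then have "i + j \<le> 2 * CARD('a) - 3" using assms q2 by auto
    then show "coeff G i * (\<Sum>a\<in>UNIV. (a::'a) ^ (i + j)) = (if i = CARD('a) - 1 - j then - coeff G i else 0)"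
      using ff_sum_pow_range[where 'a='a, of "i+j"] assms q2 by auto
  qed
  also have "\<dots> = - coeff G (CARD('a) - 1 - j)" by (simp add: sum.delta)
  finally show ?thesis .
qed

lemma two_eq_zero:
  assumes "CARD('a::{field,finite}) = 2 ^ l" "l > 0"
  shows "(2::'a) = 0"
proof -
  have "(of_nat (2 ^ l) :: 'a) = 0" using ff_card_zero[where 'a='a] assms by simp
  then have "(2::'a) ^ l = 0" by simp
  then show ?thesis by simp
qed

lemma sq_add_char2:
  fixes x y :: "'a::field"
  assumes "(2::'a) = 0"
  shows "(x + y) ^ 2 = x ^ 2 + y ^ 2"
proof -
  have "(x + y) ^ 2 = x ^ 2 + y ^ 2 + 2 * x * y" by (simp add: power2_eq_square algebra_simps)
  then show ?thesis using assms by simp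
qed

lemma pow_two_pow_suc: "((x::'a::monoid_mult) ^ (2 ^ i)) ^ 2 = x ^ (2 ^ Suc i)"
  by (metis power_Suc power_mult mult.commute)

lemma frob_add:
  fixes a b :: "'a::field"
  assumes "(2::'a) = 0"
  shows "(a + b) ^ (2 ^ i) = a ^ (2 ^ i) + b ^ (2 ^ i)"
proof (induction i)
  case 0 then show ?case by simp
next
  case (Suc i)
  have sq: "(x + y) ^ 2 = x ^ 2 + y ^ 2" for x y :: 'a
  proof -
    have "(x + y) ^ 2 = x ^ 2 + y ^ 2 + 2 * x * y" by (simp add: power2_eq_square algebra_simps)
    then show ?thesis using assms by simp
  qed
  have "(a + b) ^ (2 ^ Suc i) = ((a + b) ^ (2 ^ i)) ^ 2" by (simp only: pow_two_pow_suc)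
  also have "\<dots> = (a ^ (2 ^ i)) ^ 2 + (b ^ (2 ^ i)) ^ 2" using Suc sq by simp
  also have "\<dots> = a ^ (2 ^ Suc i) + b ^ (2 ^ Suc i)" by (simp only: pow_two_pow_suc)
  finally show ?case .
qed

lemma ftr_add:
  fixes a b :: "'a::field"
  assumes "(2::'a) = 0"
  shows "ftr l (a + b) = ftr l a + ftr l b"
  unfolding ftr_def using frob_add[OF assms] by (simp add: sum.distrib)

lemma ftr_zero: "ftr l (0::'a::field) = 0"
  unfolding ftr_def by (intro sum.neutral) simp

lemma ftr_sum:
  fixes t :: "'i \<Rightarrow> 'a::field"
  assumes "(2::'a) = 0" "finite I"
  shows "ftr l (\<Sum>i\<in>I. t i) = (\<Sum>i\<in>I. ftr l (t i))"
  using assms(2) by (induction I rule: finite_induct) (simp_all add: ftr_zero ftr_add[OF assms(1)])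

lemma sq_sum_char2:
  fixes t :: "'i \<Rightarrow> 'a::field"
  assumes "(2::'a) = 0" "finite I"
  shows "(\<Sum>i\<in>I. t i) ^ 2 = (\<Sum>i\<in>I. t i ^ 2)"
  using assms(2)
proof (induction I rule: finite_induct)
  case empty then show ?case by simp
next
  case (insert x F)
  then show ?case using sq_add_char2[OF assms(1), of "t x" "sum t F"] by simp
qed

lemma ftr_01:
  fixes x :: "'a::{field,finite}"
  assumes "CARD('a) = 2 ^ l" "l > 0"
  shows "ftr l x = 0 \<or> ftr l x = 1"
proof -
  have two: "(2::'a) = 0" by (rule two_eq_zero[OF assms])
  have "(ftr l x) ^ 2 = (\<Sum>i<l. (x ^ (2 ^ i)) ^ 2)"
    unfolding ftr_def by (rule sq_sum_char2[OF two]) simp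
  also have "\<dots> = (\<Sum>i<l. x ^ (2 ^ Suc i))"
    by (simp only: pow_two_pow_suc)
  also have "\<dots> = ftr l x"
  proof -
    have "(\<Sum>i<Suc l. x ^ (2 ^ i)) = x ^ (2 ^ 0) + (\<Sum>i<l. x ^ (2 ^ Suc i))"
      by (rule sum.lessThan_Suc_shift)
    moreover have "(\<Sum>i<Suc l. x ^ (2 ^ i)) = ftr l x + x ^ (2 ^ l)"
      unfolding ftr_def by simp
    moreover have "x ^ (2 ^ l) = x" using ff_pow_card[of x] assms by simp
    ultimately show ?thesis by simp
  qed
  finally have "ftr l x * (ftr l x - 1) = 0" by (simp add: power2_eq_square algebra_simps)
  then show ?thesis by simp
qed

lemma sign_of_add01:
  fixes s u :: "'a::field"
  assumes "(2::'a) = 0" "s = 0 \<or> s = 1" "u = 0 \<or> u = 1"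
  shows "sign_of (s + u) = sign_of s * sign_of u"
  using assms by (auto simp: sign_of_def)

lemma prod_sign_ftr:
  fixes t :: "'i \<Rightarrow> 'a::{field,finite}"
  assumes "CARD('a) = 2 ^ l" "l > 0" "finite I"
  shows "(\<Prod>i\<in>I. sign_of (ftr l (t i))) = sign_of (ftr l (\<Sum>i\<in>I. t i))"
proof -
  have two: "(2::'a) = 0" by (rule two_eq_zero[OF assms(1,2)])
  show ?thesis using assms(3)
  proof (induction I rule: finite_induct)
    case empty then show ?case by (simp add: ftr_zero sign_of_def)
  next
    case (insert x F)
    have "sign_of (ftr l (\<Sum>i\<in>insert x F. t i)) = sign_of (ftr l (t x) + ftr l (\<Sum>i\<in>F. t i))"
      using insert by (simp add: ftr_add[OF two])
    also have "\<dots> = sign_of (ftr l (t x)) * sign_of (ftr l (\<Sum>i\<in>F. t i))"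
      by (rule sign_of_add01[OF two ftr_01[OF assms(1,2)] ftr_01[OF assms(1,2)]])
    finally show ?case using insert by simp
  qed
qed



definition lagD :: "('i::finite \<Rightarrow> 'a::field) \<Rightarrow> 'i \<Rightarrow> 'a" where
  "lagD pts i = (\<Prod>i'\<in>UNIV-{i}. (pts i - pts i'))"

definition lagN :: "('i::finite \<Rightarrow> 'a::field) \<Rightarrow> 'i \<Rightarrow> 'a poly" where
  "lagN pts i = (\<Prod>i'\<in>UNIV-{i}. [:- pts i', 1:])"

definition lagI :: "('i::finite \<Rightarrow> 'a::field) \<Rightarrow> ('i \<Rightarrow> 'a) \<Rightarrow> 'a poly" where
  "lagI pts vals = (\<Sum>i\<in>UNIV. smult (vals i / lagD pts i) (lagN pts i))"

lemma lagI_poly: "poly (lagI pts vals) y = (\<Sum>i\<in>UNIV. vals i * (poly (lagN pts i) y / lagD pts i))"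
  unfolding lagI_def by (simp add: poly_sum)

lemma lagN_poly: "poly (lagN pts i) y = (\<Prod>i'\<in>UNIV-{i}. (y - pts i'))"
  unfolding lagN_def by (simp add: poly_prod)

lemma lagI_eval:
  assumes "inj pts"
  shows "poly (lagI pts vals) (pts j) = vals j"
proof -
  have "vals i * (poly (lagN pts i) (pts j) / lagD pts i) = (if i = j then vals j else 0)" for i
  proof (cases "i = j")
    case True
    have "lagD pts j \<noteq> 0" unfolding lagD_def using assms by (auto simp: inj_eq)
    then show ?thesis using True by (simp add: lagN_poly lagD_def)
  next
    case False
    then have "j \<in> UNIV - {i}" by simp
    then have "(\<Prod>i'\<in>UNIV-{i}. (pts j - pts i')) = 0"
      by (intro prod_zero) auto
    then show ?thesis using False by (simp add: lagN_poly)
  qed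
  then show ?thesis by (simp add: lagI_poly)
qed

lemma lagI_degree:
  fixes pts :: "'i::finite \<Rightarrow> 'a::field"
  shows "degree (lagI pts vals) \<le> CARD('i) - 1"
proof -
  have "degree (lagN pts i) \<le> CARD('i) - 1" for i
  proof -
    have "degree (lagN pts i) \<le> sum (degree \<circ> (\<lambda>i'. [:- pts i', 1:])) (UNIV - {i})"
      unfolding lagN_def by (rule degree_prod_sum_le) simp
    also have "\<dots> = card (UNIV - {i})" by simp
    also have "\<dots> = CARD('i) - 1" by (simp add: card_Diff_singleton)
    finally show ?thesis .
  qed
  then show ?thesis unfolding lagI_def
    by (intro degree_sum_le) (auto intro: order.trans[OF degree_smult_le])
qed

lemma lagI_add: "lagI pts (\<lambda>i. u i + v i) = lagI pts u + lagI pts v"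
  unfolding lagI_def by (simp add: add_divide_distrib smult_add_left sum.distrib)

lemma lagI_scale: "lagI pts (\<lambda>i. c * u i) = smult c (lagI pts u)"
  unfolding lagI_def by (rule poly_eqI) (simp add: coeff_sum sum_distrib_left mult.assoc)

locale cz =
  fixes h :: "('n::finite + 'k::finite) \<Rightarrow> 'a::{field,finite}" and l m :: nat
  assumes h_bij: "bij h" and card_a: "CARD('a) = 2 ^ l" and l3: "l \<ge> 3"
    and card_n: "CARD('n) = 3 * CARD('a) div 4" and card_k: "CARD('k) = CARD('a) div 4"
    and m_def: "m = (CARD('a) - 2) div 3"
begin

definition al :: "'n \<Rightarrow> 'a" where "al i = h (Inl i)"
definition sg :: "'k \<Rightarrow> 'a" where "sg j = h (Inr j)"
definition ev :: "'a poly \<Rightarrow> 'a ^ 'n" where "ev P = (\<chi> i. poly P (al i))"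

lemma q_form: "\<exists>t\<ge>1. CARD('a) = 8 * t"
proof -
  have "l = 3 + (l - 3)" using l3 by simp
  then have "(2::nat) ^ l = 2 ^ 3 * 2 ^ (l - 3)" by (metis power_add)
  then show ?thesis by (intro exI[of _ "2 ^ (l - 3)"]) (use card_a in simp)
qed

lemma arith:
  "CARD('k) \<le> m + 1" "1 \<le> CARD('k)" "m < CARD('n)" "3 * m \<le> CARD('a) - 2"
  "CARD('a) div 3 \<le> m + 1" "CARD('n) + CARD('k) = CARD('a)" "CARD('a) \<ge> 8"
  "m + 1 + CARD('n) \<le> CARD('a) + CARD('k)"
  using q_form card_n card_k m_def by auto

lemma two0: "(2::'a) = 0" using two_eq_zero[OF card_a] l3 by simp

lemma inj_al: "inj al" using h_bij unfolding al_def bij_def inj_def by auto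
lemma inj_sg: "inj sg" using h_bij unfolding sg_def bij_def inj_def by auto
lemma al_sg: "al i \<noteq> sg j" using h_bij unfolding al_def sg_def bij_def inj_def by auto

lemma sum_split: "(\<Sum>a\<in>UNIV. f a) = (\<Sum>i\<in>UNIV. f (al i)) + (\<Sum>j\<in>UNIV. f (sg j))"
proof -
  have "(\<Sum>a\<in>UNIV. f a) = (\<Sum>s\<in>UNIV. f (h s))"
    using sum.reindex_bij_betw[of h UNIV UNIV f] h_bij by (simp add: bij_betw_def bij_def)
  also have "\<dots> = (\<Sum>s\<in>UNIV <+> UNIV. f (h s))" by simp
  also have "\<dots> = (\<Sum>i\<in>UNIV. f (al i)) + (\<Sum>j\<in>UNIV. f (sg j))"
    by (subst sum.Plus) (auto simp: al_def sg_def comp_def)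
  finally show ?thesis .
qed

lemma card_range_al: "card (range al) = CARD('n)"
  using inj_al by (simp add: card_image)

lemma poly_zero_al:
  assumes "degree P < CARD('n)" "\<And>i. poly P (al i) = 0"
  shows "P = 0"
proof (rule poly_eqI_degree[of "range al"])
  show "\<And>x. x \<in> range al \<Longrightarrow> poly P x = poly 0 x" using assms by auto
  show "degree P < card (range al)" using assms card_range_al by simp
  show "degree 0 < card (range al)" using card_range_al by simp
qed

lemma ev_add: "ev (P + Q) = ev P + ev Q" by (simp add: ev_def vec_eq_iff)
lemma ev_diff: "ev (P - Q) = ev P - ev Q" by (simp add: ev_def vec_eq_iff)
lemma ev_smult: "ev (smult c P) = c *s ev P" by (simp add: ev_def vec_eq_iff)
lemma ev_0: "ev 0 = 0" by (simp add: ev_def vec_eq_iff)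
lemma ev_nth: "ev P $ i = poly P (al i)" by (simp add: ev_def)

lemma ev_inj:
  assumes "ev P = ev Q" "degree P \<le> m" "degree Q \<le> m"
  shows "P = Q"
proof -
  have "degree (P - Q) < CARD('n)"
    using degree_diff_le[of P m Q] assms arith(3) by linarith
  moreover have "poly (P - Q) (al i) = 0" for i
    using assms(1) by (metis ev_nth eq_iff_diff_eq_0 poly_diff)
  ultimately show ?thesis using poly_zero_al[of "P - Q"] by simp
qed

definition C1 :: "('a ^ 'n) set" where "C1 = ev ` {P. degree P \<le> m}"
definition D :: "('a ^ 'n) set" where "D = ev ` {P. degree P \<le> m \<and> (\<forall>j. poly P (sg j) = 0)}"
definition C2 :: "('a ^ 'n) set" where "C2 = ev ` {Q. degree Q \<le> CARD('a) - 2 - m}"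

lemma subspace_C1: "vec.subspace C1"
  unfolding vec.subspace_def C1_def
proof (intro conjI ballI allI)
  show "0 \<in> ev ` {P. degree P \<le> m}" using ev_0 by force
next
  fix x y assume "x \<in> ev ` {P. degree P \<le> m}" "y \<in> ev ` {P. degree P \<le> m}"
  then obtain P Q where "degree P \<le> m" "degree Q \<le> m" "x = ev P" "y = ev Q" by auto
  then show "x + y \<in> ev ` {P. degree P \<le> m}"
    by (intro image_eqI[of _ _ "P + Q"]) (auto simp: ev_add intro: degree_add_le)
next
  fix c x assume "x \<in> ev ` {P. degree P \<le> m}"
  then obtain P where "degree P \<le> m" "x = ev P" by auto
  then show "c *s x \<in> ev ` {P. degree P \<le> m}"
    by (intro image_eqI[of _ _ "smult c P"]) (auto simp: ev_smult intro: order.trans[OF degree_smult_le])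
qed

lemma subspace_C2: "vec.subspace C2"
  unfolding vec.subspace_def C2_def
proof (intro conjI ballI allI)
  show "0 \<in> ev ` {P. degree P \<le> CARD('a) - 2 - m}" using ev_0 by force
next
  fix x y assume "x \<in> ev ` {P. degree P \<le> CARD('a) - 2 - m}" "y \<in> ev ` {P. degree P \<le> CARD('a) - 2 - m}"
  then obtain P Q where "degree P \<le> CARD('a) - 2 - m" "degree Q \<le> CARD('a) - 2 - m" "x = ev P" "y = ev Q" by auto
  then show "x + y \<in> ev ` {P. degree P \<le> CARD('a) - 2 - m}"
    by (intro image_eqI[of _ _ "P + Q"]) (auto simp: ev_add intro: degree_add_le)
next
  fix c x assume "x \<in> ev ` {P. degree P \<le> CARD('a) - 2 - m}"
  then obtain P where "degree P \<le> CARD('a) - 2 - m" "x = ev P" by auto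
  then show "c *s x \<in> ev ` {P. degree P \<le> CARD('a) - 2 - m}"
    by (intro image_eqI[of _ _ "smult c P"]) (auto simp: ev_smult intro: order.trans[OF degree_smult_le])
qed

lemma subspace_D: "vec.subspace D"
  unfolding vec.subspace_def D_def
proof (intro conjI ballI allI)
  show "0 \<in> ev ` {P. degree P \<le> m \<and> (\<forall>j. poly P (sg j) = 0)}" using ev_0 by force
next
  fix x y assume "x \<in> ev ` {P. degree P \<le> m \<and> (\<forall>j. poly P (sg j) = 0)}"
     "y \<in> ev ` {P. degree P \<le> m \<and> (\<forall>j. poly P (sg j) = 0)}"
  then obtain P Q where "degree P \<le> m" "degree Q \<le> m" "x = ev P" "y = ev Q"
     "\<forall>j. poly P (sg j) = 0" "\<forall>j. poly Q (sg j) = 0" by auto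
  then show "x + y \<in> ev ` {P. degree P \<le> m \<and> (\<forall>j. poly P (sg j) = 0)}"
    by (intro image_eqI[of _ _ "P + Q"]) (auto simp: ev_add intro: degree_add_le)
next
  fix c x assume "x \<in> ev ` {P. degree P \<le> m \<and> (\<forall>j. poly P (sg j) = 0)}"
  then obtain P where "degree P \<le> m" "x = ev P" "\<forall>j. poly P (sg j) = 0" by auto
  then show "c *s x \<in> ev ` {P. degree P \<le> m \<and> (\<forall>j. poly P (sg j) = 0)}"
    by (intro image_eqI[of _ _ "smult c P"]) (auto simp: ev_smult intro: order.trans[OF degree_smult_le])
qed

lemma D_sub_C1: "D \<subseteq> C1" unfolding D_def C1_def by auto

definition lagS :: "'a ^ 'k \<Rightarrow> 'a poly" where "lagS x = lagI sg (\<lambda>j. x $ j)"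
definition E :: "'a ^ 'k \<Rightarrow> 'a ^ 'n" where "E x = ev (lagS x)"

lemma lagS_deg: "degree (lagS x) \<le> m"
  using lagI_degree[of sg "\<lambda>j. x $ j"] arith(1) unfolding lagS_def by linarith

lemma lagS_eval: "poly (lagS x) (sg j) = x $ j"
  unfolding lagS_def using lagI_eval[OF inj_sg] by simp

lemma E_C1: "E x \<in> C1" unfolding E_def C1_def using lagS_deg by auto

lemma E_add: "E (x + y) = E x + E y"
proof -
  have e: "(($) (x+y)) = (\<lambda>i. x$i + y$i)" by (rule ext) simp
  show ?thesis unfolding E_def lagS_def e lagI_add ev_add by simp
qed

lemma E_scale: "E (c *s x) = c *s E x"
proof -
  have e: "(($) (c *s x)) = (\<lambda>i. c * x$i)" by (rule ext) simp
  show ?thesis unfolding E_def lagS_def e lagI_scale ev_smult by simp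
qed

lemma E_linear: "Vector_Spaces.linear (*s) (*s) E"
  by (simp add: Vector_Spaces.linear_iff vec.vector_space_axioms E_add E_scale)

lemma E_diff_D:
  assumes "E x - E y \<in> D" shows "x = y"
proof -
  from assms obtain R where R: "degree R \<le> m" "\<forall>j. poly R (sg j) = 0" "E x - E y = ev R"
    unfolding D_def by auto
  have "ev (lagS x - lagS y) = ev R" using R(3) by (simp add: E_def ev_diff)
  moreover have "degree (lagS x - lagS y) \<le> m"
    using degree_diff_le[OF lagS_deg lagS_deg] .
  ultimately have "lagS x - lagS y = R" using ev_inj R(1) by blast
  then have "x $ j - y $ j = 0" for j using R(2) lagS_eval
    by (metis poly_diff)
  then show ?thesis by (simp add: vec_eq_iff)
qed

lemma C1_decomp:
  assumes "c \<in> C1" shows "c - E (\<chi> j. poly (SOME P. degree P \<le> m \<and> c = ev P) (sg j)) \<in> D"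
proof -
  define P where "P = (SOME P. degree P \<le> m \<and> c = ev P)"
  have P: "degree P \<le> m" "c = ev P" using assms unfolding C1_def P_def
    by (auto intro: someI2_ex)
  define x where "x = (\<chi> j. poly P (sg j))"
  have "c - E x = ev (P - lagS x)" using P by (simp add: E_def ev_diff)
  moreover have "degree (P - lagS x) \<le> m" using degree_diff_le[OF P(1) lagS_deg] .
  moreover have "poly (P - lagS x) (sg j) = 0" for j by (simp add: lagS_eval x_def)
  ultimately show ?thesis unfolding D_def P_def[symmetric] x_def[symmetric] by auto
qed

lemma C1_decomp_ex: "c \<in> C1 \<Longrightarrow> \<exists>x. c - E x \<in> D"
  using C1_decomp by blast

lemma zero_D: "0 \<in> D" using subspace_D vec.subspace_0 by blast

lemma E_0: "E 0 = 0" using E_scale[of 0 0] by simp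

lemma E_inj: "inj E"
proof (rule injI)
  fix x y assume "E x = E y"
  then have "E x - E y \<in> D" using zero_D by simp
  then show "x = y" by (rule E_diff_D)
qed

lemma D_dual: "dual_code C2 = D"
proof
  show "D \<subseteq> dual_code C2"
  proof
    fix v assume "v \<in> D"
    then obtain P where P: "degree P \<le> m" "\<forall>j. poly P (sg j) = 0" "v = ev P" unfolding D_def by auto
    show "v \<in> dual_code C2" unfolding dual_code_def
    proof (intro CollectI ballI)
      fix w assume "w \<in> C2"
      then obtain Q where Q: "degree Q \<le> CARD('a) - 2 - m" "w = ev Q" unfolding C2_def by auto
      have dPQ: "degree (P * Q) \<le> CARD('a) - 2"
        using degree_mult_le[of P Q] P(1) Q(1) arith(4) by linarith
      have "bil v w = (\<Sum>i\<in>UNIV. poly (P * Q) (al i))"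
        unfolding bil_def P(3) Q(2) by (simp add: ev_nth)
      also have "\<dots> = (\<Sum>a\<in>UNIV. poly (P * Q) a) - (\<Sum>j\<in>UNIV. poly (P * Q) (sg j))"
        using sum_split[of "poly (P * Q)"] by simp
      also have "\<dots> = 0" using poly_sum_UNIV_zero[OF dPQ] P(2) by simp
      finally show "bil v w = 0" .
    qed
  qed
next
  show "dual_code C2 \<subseteq> D"
  proof
    fix v assume v: "v \<in> dual_code C2"
    define g where "g a = (if a \<in> range al then v $ (inv al a) else 0)" for a
    define G where "G = lagI (id :: 'a \<Rightarrow> 'a) g"
    have Gv: "poly G a = g a" for a unfolding G_def using lagI_eval[of "id::'a\<Rightarrow>'a" g a] by simp
    have Gd: "degree G \<le> CARD('a) - 1" unfolding G_def by (rule lagI_degree)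
    have gal: "g (al i) = v $ i" for i unfolding g_def using inj_al by simp
    have gsg: "g (sg j) = 0" for j
    proof -
      have "sg j \<notin> range al" using al_sg by (metis imageE)
      then show ?thesis unfolding g_def by simp
    qed
    have co: "coeff G i = 0" if "m < i" "i \<le> CARD('a) - 1" for i
    proof -
      define j where "j = CARD('a) - 1 - i"
      have j: "j \<le> CARD('a) - 2 - m" "i = CARD('a) - 1 - j" using that arith(7) unfolding j_def by auto
      have "ev (monom 1 j) \<in> C2" unfolding C2_def using j(1)
        by (intro imageI) (auto simp: degree_monom_le intro: order.trans[OF degree_monom_le])
      then have "bil v (ev (monom 1 j)) = 0" using v unfolding dual_code_def by auto
      moreover have "bil v (ev (monom 1 j)) = (\<Sum>a\<in>UNIV. poly G a * a ^ j)"
      proof -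
        have "bil v (ev (monom 1 j)) = (\<Sum>i\<in>UNIV. g (al i) * al i ^ j)"
          unfolding bil_def by (simp add: ev_nth gal poly_monom)
        also have "\<dots> = (\<Sum>a\<in>UNIV. g a * a ^ j)"
          using sum_split[of "\<lambda>a. g a * a ^ j"] by (simp add: gsg)
        finally show ?thesis by (simp add: Gv)
      qed
      moreover have "(\<Sum>a\<in>UNIV. poly G a * a ^ j) = - coeff G (CARD('a) - 1 - j)"
        by (rule poly_coeff_extract[OF Gd]) (use j arith(7) in linarith)
      ultimately show ?thesis using j(2) by simp
    qed
    have "degree G \<le> m"
    proof (rule degree_le, intro allI impI)
      fix i assume "m < i"
      show "coeff G i = 0"
      proof (cases "i \<le> CARD('a) - 1")
        case True then show ?thesis using co \<open>m < i\<close> by simp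
      next
        case False then show ?thesis using Gd by (simp add: coeff_eq_0)
      qed
    qed
    moreover have "ev G = v" by (simp add: vec_eq_iff ev_nth Gv gal)
    moreover have "\<forall>j. poly G (sg j) = 0" by (simp add: Gv gsg)
    ultimately show "v \<in> D" unfolding D_def by auto
  qed
qed

lemma subspace_Eim: "vec.subspace (range E)"
  unfolding vec.subspace_def
proof (intro conjI ballI allI)
  show "0 \<in> range E" using E_0 by (metis rangeI)
next
  fix x y assume "x \<in> range E" "y \<in> range E"
  then show "x + y \<in> range E" by (auto simp flip: E_add)
next
  fix c x assume "x \<in> range E"
  then show "c *s x \<in> range E" by (auto simp flip: E_scale)
qed

lemma dim_C1_D: "vec.dim C1 - vec.dim D = CARD('k)"
proof -
  have int: "range E \<inter> D = {0}"
  proof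
    show "range E \<inter> D \<subseteq> {0}"
    proof
      fix y assume "y \<in> range E \<inter> D"
      then obtain x where "y = E x" "E x \<in> D" by auto
      then have "E x - E 0 \<in> D" by (simp add: E_0)
      then have "x = 0" by (rule E_diff_D)
      then show "y \<in> {0}" using \<open>y = E x\<close> E_0 by simp
    qed
    show "{0} \<subseteq> range E \<inter> D" using zero_D E_0 by (metis Int_iff empty_subsetI insert_subset rangeI)
  qed
  have sum: "{x + y |x y. x \<in> range E \<and> y \<in> D} = C1"
  proof
    show "{x + y |x y. x \<in> range E \<and> y \<in> D} \<subseteq> C1"
      using E_C1 D_sub_C1 subspace_C1 vec.subspace_add by blast
    show "C1 \<subseteq> {x + y |x y. x \<in> range E \<and> y \<in> D}"
    proof
      fix c assume "c \<in> C1"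
      then obtain x where "c - E x \<in> D" using C1_decomp_ex by blast
      then show "c \<in> {x + y |x y. x \<in> range E \<and> y \<in> D}"
        by (intro CollectI exI[of _ "E x"] exI[of _ "c - E x"]) auto
    qed
  qed
  have "vec.dim C1 + vec.dim (range E \<inter> D) = vec.dim (range E) + vec.dim D"
    using vec.dim_sums_Int[OF subspace_Eim subspace_D] sum by simp
  moreover have "vec.dim (range E \<inter> D) = 0" using int by simp
  moreover have "vec.dim (range E) = vec.dim (UNIV :: ('a ^ 'k) set)"
    using vec.dim_image_eq[OF E_linear] E_inj by (simp add: inj_on_def inj_def)
  moreover have "vec.dim (UNIV :: ('a ^ 'k) set) = CARD('k)"
    by (simp add: card_cart_basis)
  ultimately show ?thesis by simp
qed

lemma weight_ev:
  assumes "P \<noteq> 0"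
  shows "hweight (ev P) \<ge> CARD('n) - degree P"
proof -
  have "al ` {i. poly P (al i) = 0} \<subseteq> {x. poly P x = 0}" by auto
  then have "card (al ` {i. poly P (al i) = 0}) \<le> card {x. poly P x = 0}"
    by (intro card_mono poly_roots_finite[OF assms])
  moreover have "card (al ` {i. poly P (al i) = 0}) = card {i. poly P (al i) = 0}"
    using inj_al by (intro card_image) (auto simp: inj_on_def inj_def)
  ultimately have z: "card {i. poly P (al i) = 0} \<le> degree P"
    using card_poly_roots_bound[OF assms] by linarith
  have "{i. ev P $ i \<noteq> 0} = UNIV - {i. poly P (al i) = 0}" by (auto simp: ev_nth)
  then have "hweight (ev P) = CARD('n) - card {i. poly P (al i) = 0}"
    unfolding hweight_def by (simp add: card_Diff_subset)
  then show ?thesis using z by linarith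
qed

lemma arith2:
  "int (CARD('n) - m) \<ge> int (CARD('a) div 3) - int (CARD('a) div 4) + 1"
  "int (CARD('n) - (CARD('a) - 2 - m)) \<ge> int (CARD('a) div 3) - int (CARD('a) div 4) + 1"
  using q_form card_n card_k m_def by auto

lemma dist1:
  assumes "v \<in> C1 - dual_code C2"
  shows "int (hweight v) \<ge> int (CARD('a) div 3) - int (CARD('a) div 4) + 1"
proof -
  obtain P where P: "degree P \<le> m" "v = ev P" using assms unfolding C1_def by auto
  have "v \<noteq> 0" using assms zero_D D_dual by auto
  then have "P \<noteq> 0" using P ev_0 by auto
  then have "hweight v \<ge> CARD('n) - m" using weight_ev[OF \<open>P \<noteq> 0\<close>] P(1) unfolding P(2) by linarith
  then show ?thesis using arith2(1) by linarith
qed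

lemma zero_dual: "0 \<in> dual_code S" unfolding dual_code_def bil_def by simp

lemma dist2:
  assumes "v \<in> C2 - dual_code C1"
  shows "int (hweight v) \<ge> int (CARD('a) div 3) - int (CARD('a) div 4) + 1"
proof -
  obtain P where P: "degree P \<le> CARD('a) - 2 - m" "v = ev P" using assms unfolding C2_def by auto
  have "v \<noteq> 0" using assms zero_dual by auto
  then have "P \<noteq> 0" using P ev_0 by auto
  then have "hweight v \<ge> CARD('n) - (CARD('a) - 2 - m)" using weight_ev[OF \<open>P \<noteq> 0\<close>] P(1) unfolding P(2) by linarith
  then show ?thesis using arith2(2) by linarith
qed

lemma coset_eq: "coset_state D c v = (if v - c \<in> D then 1 else 0)"
proof -
  have "coset_state D c v = (\<Sum>\<alpha>\<in>D. if \<alpha> = v - c then 1 else 0)"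
    unfolding coset_state_def ket_def by (intro sum.cong refl) auto
  then show ?thesis by simp
qed

definition NN :: nat where "NN = card D"
definition rr :: complex where "rr = complex_of_real (sqrt (real NN))"

lemma NN_pos: "NN > 0" unfolding NN_def using zero_D by (auto simp: card_gt_0_iff)
lemma rr_nz: "rr \<noteq> 0" unfolding rr_def using NN_pos by simp
lemma rr_sq: "cnj (1 / rr) * (1 / rr) = 1 / of_nat NN"
proof -
  have s: "sqrt (real NN) * sqrt (real NN) = real NN" using NN_pos by simp
  have r2: "rr * rr = of_nat NN"
    unfolding rr_def of_real_mult[symmetric] s by simp
  have cr: "cnj rr = rr" unfolding rr_def by simp
  show ?thesis by (simp add: cr r2 flip: r2)
qed

definition BB :: "'a ^ 'k \<Rightarrow> 'a ^ 'n \<Rightarrow> complex" where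
  "BB x v = (if v - E x \<in> D then 1 / rr else 0)"

lemma card_coset: "card {v. v - c \<in> D} = NN"
proof -
  have "{v. v - c \<in> D} = (\<lambda>a. a + c) ` D" by (auto simp: image_iff) (metis diff_add_cancel)
  moreover have "inj_on (\<lambda>a. a + c) D" by (auto simp: inj_on_def)
  ultimately show ?thesis unfolding NN_def by (simp add: card_image)
qed

lemma coset_shift: "c - d \<in> D \<Longrightarrow> (v - c \<in> D) = (v - d \<in> D)"
proof -
  assume cd: "c - d \<in> D"
  have "v - d = (v - c) + (c - d)" "v - c = (v - d) - (c - d)" by simp_all
  then show ?thesis using cd subspace_D vec.subspace_add vec.subspace_diff by metis
qed

lemma BB_orth: "inner_st (BB x) (BB y) = (if x = y then 1 else 0)"
proof (cases "x = y")
  case True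
  have "inner_st (BB x) (BB y) = (\<Sum>v\<in>UNIV. if v - E x \<in> D then 1 / of_nat NN else 0)"
    unfolding inner_st_def BB_def True using rr_sq by (intro sum.cong refl) auto
  also have "\<dots> = of_nat (card {v. v - E x \<in> D}) / of_nat NN"
    by (simp add: sum.If_cases Int_def)
  also have "\<dots> = 1" using card_coset NN_pos by simp
  finally show ?thesis using True by simp
next
  case False
  have hz: "cnj (BB x v) * BB y v = 0" for v
  proof (rule ccontr)
    assume "cnj (BB x v) * BB y v \<noteq> 0"
    then have "v - E x \<in> D" "v - E y \<in> D" unfolding BB_def by (auto split: if_splits)
    then have "E y - E x \<in> D" using subspace_D vec.subspace_diff by fastforce
    then show False using E_diff_D False by blast
  qed
  have "inner_st (BB x) (BB y) = 0" unfolding inner_st_def by (rule sum.neutral) (use hz in blast)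
  then show ?thesis using False by simp
qed

definition lab :: "'a ^ 'n \<Rightarrow> 'a ^ 'k" where "lab c = (SOME x. c - E x \<in> D)"

lemma lab_D: "c \<in> C1 \<Longrightarrow> c - E (lab c) \<in> D"
  unfolding lab_def using C1_decomp_ex by (metis someI_ex)

lemma lab_E: "lab (E x) = x"
proof -
  have "E x \<in> C1" by (rule E_C1)
  then have "E x - E (lab (E x)) \<in> D" by (rule lab_D)
  then show ?thesis using E_diff_D by metis
qed

lemma cs_BB: "c \<in> C1 \<Longrightarrow> coset_state D c v = rr * BB (lab c) v"
  using coset_shift[OF lab_D, of c v] rr_nz by (simp add: coset_eq BB_def)

lemma css_eq: "css_space C1 C2 = {\<lambda>v. \<Sum>x\<in>UNIV. f x * BB x v | f. True}"
proof
  show "css_space C1 C2 \<subseteq> {\<lambda>v. \<Sum>x\<in>UNIV. f x * BB x v | f. True}"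
  proof
    fix \<psi> assume "\<psi> \<in> css_space C1 C2"
    then obtain f where f: "\<psi> = (\<lambda>v. \<Sum>c\<in>C1. f c * coset_state D c v)"
      unfolding css_space_def D_dual by auto
    define g where "g x = (\<Sum>c\<in>{c. c \<in> C1 \<and> lab c = x}. f c * rr)" for x
    have "\<psi> = (\<lambda>v. \<Sum>x\<in>UNIV. g x * BB x v)"
    proof
      fix v
      have "(\<Sum>x\<in>UNIV. g x * BB x v) = (\<Sum>x\<in>UNIV. \<Sum>c\<in>{c. c \<in> C1 \<and> lab c = x}. f c * coset_state D c v)"
        unfolding g_def sum_distrib_right
        by (intro sum.cong refl) (auto simp: cs_BB mult.assoc)
      also have "\<dots> = (\<Sum>c\<in>C1. f c * coset_state D c v)"
        by (rule sum.group) auto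
      finally show "\<psi> v = (\<Sum>x\<in>UNIV. g x * BB x v)" using f by simp
    qed
    then show "\<psi> \<in> {\<lambda>v. \<Sum>x\<in>UNIV. f x * BB x v | f. True}" by blast
  qed
  show "{\<lambda>v. \<Sum>x\<in>UNIV. f x * BB x v | f. True} \<subseteq> css_space C1 C2"
  proof
    fix \<psi> assume "\<psi> \<in> {\<lambda>v. \<Sum>x\<in>UNIV. f x * BB x v | f. True}"
    then obtain g where g: "\<psi> = (\<lambda>v. \<Sum>x\<in>UNIV. g x * BB x v)" by auto
    define f where "f c = (if c \<in> range E then g (lab c) / rr else 0)" for c
    have "\<psi> = (\<lambda>v. \<Sum>c\<in>C1. f c * coset_state D c v)"
    proof
      fix v
      have "(\<Sum>c\<in>C1. f c * coset_state D c v) = (\<Sum>c\<in>range E. f c * coset_state D c v)"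
        using E_C1 by (intro sum.mono_neutral_right) (auto simp: f_def)
      also have "\<dots> = (\<Sum>x\<in>UNIV. f (E x) * coset_state D (E x) v)"
        using E_inj by (simp add: sum.reindex)
      also have "\<dots> = (\<Sum>x\<in>UNIV. g x * BB x v)"
        using rr_nz by (intro sum.cong refl) (simp add: f_def lab_E cs_BB[OF E_C1])
      finally show "\<psi> v = (\<Sum>c\<in>C1. f c * coset_state D c v)" using g by simp
    qed
    then show "\<psi> \<in> css_space C1 C2" unfolding css_space_def D_dual by blast
  qed
qed

lemma coset_poly:
  assumes "u - E x \<in> D"
  shows "\<exists>P. degree P \<le> m \<and> u = ev P \<and> (\<forall>j. poly P (sg j) = x $ j)"
proof -
  from assms obtain R where R: "degree R \<le> m" "\<forall>j. poly R (sg j) = 0" "u - E x = ev R"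
    unfolding D_def by auto
  have "u = ev (lagS x + R)" using R(3) by (simp add: E_def ev_add algebra_simps)
  moreover have "degree (lagS x + R) \<le> m" using degree_add_le[OF lagS_deg R(1)] .
  moreover have "\<forall>j. poly (lagS x + R) (sg j) = x $ j" using R(2) by (simp add: lagS_eval)
  ultimately show ?thesis by blast
qed

lemma phase_key:
  assumes "u - E x \<in> D" "v - E y \<in> D" "w - E z \<in> D"
  shows "(\<Sum>i\<in>UNIV. u $ i * v $ i * w $ i) = (\<Sum>j\<in>UNIV. x $ j * y $ j * z $ j)"
proof -
  obtain P where P: "degree P \<le> m" "u = ev P" "\<forall>j. poly P (sg j) = x $ j" using coset_poly[OF assms(1)] by blast
  obtain Q where Q: "degree Q \<le> m" "v = ev Q" "\<forall>j. poly Q (sg j) = y $ j" using coset_poly[OF assms(2)] by blast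
  obtain R where R: "degree R \<le> m" "w = ev R" "\<forall>j. poly R (sg j) = z $ j" using coset_poly[OF assms(3)] by blast
  have dg: "degree (P * Q * R) \<le> CARD('a) - 2"
    using degree_mult_le[of "P * Q" R] degree_mult_le[of P Q] P(1) Q(1) R(1) arith(4) by linarith
  have "(\<Sum>i\<in>UNIV. u $ i * v $ i * w $ i) = (\<Sum>i\<in>UNIV. poly (P * Q * R) (al i))"
    unfolding P(2) Q(2) R(2) by (simp add: ev_nth)
  also have "\<dots> = - (\<Sum>j\<in>UNIV. poly (P * Q * R) (sg j))"
    using sum_split[of "poly (P * Q * R)"] poly_sum_UNIV_zero[OF dg] by (simp add: eq_neg_iff_add_eq_0)
  also have "\<dots> = - (\<Sum>j\<in>UNIV. x $ j * y $ j * z $ j)" using P(3) Q(3) R(3) by simp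
  also have "\<dots> = (\<Sum>j\<in>UNIV. x $ j * y $ j * z $ j)"
  proof -
    have "t + t = 0" for t :: 'a using two0 by (metis mult_2 mult_zero_left)
    then show ?thesis by (metis add_eq_0_iff equation_minus_iff)
  qed
  finally show ?thesis .
qed

lemma ccz:
  "transversal_CCZ l (tensor3 (BB x) (BB y) (BB z)) =
     (\<lambda>s. sign_of (ftr l (\<Sum>i\<in>UNIV. x $ i * y $ i * z $ i)) * tensor3 (BB x) (BB y) (BB z) s)"
proof
  fix s :: "('a ^ 'n) \<times> ('a ^ 'n) \<times> ('a ^ 'n)"
  obtain u v w where s: "s = (u, v, w)" by (cases s) auto
  show "transversal_CCZ l (tensor3 (BB x) (BB y) (BB z)) s =
     sign_of (ftr l (\<Sum>i\<in>UNIV. x $ i * y $ i * z $ i)) * tensor3 (BB x) (BB y) (BB z) s"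
  proof (cases "u - E x \<in> D \<and> v - E y \<in> D \<and> w - E z \<in> D")
    case True
    have "(\<Prod>i\<in>UNIV. sign_of (ftr l (u $ i * v $ i * w $ i))) = sign_of (ftr l (\<Sum>i\<in>UNIV. u $ i * v $ i * w $ i))"
      by (rule prod_sign_ftr[OF card_a]) (use l3 in auto)
    also have "\<dots> = sign_of (ftr l (\<Sum>i\<in>UNIV. x $ i * y $ i * z $ i))"
      using phase_key[of u x v y w z] True by simp
    finally show ?thesis unfolding s transversal_CCZ_def tensor3_def by simp
  next
    case False
    then have "tensor3 (BB x) (BB y) (BB z) s = 0" unfolding s tensor3_def BB_def by auto
    then show ?thesis unfolding s transversal_CCZ_def by (simp add: s)
  qed
qed

end


theorem theorem5p1:
  fixes l :: nat
  assumes "l \<ge> 3"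
    and "CARD('a::{field,finite}) = 2 ^ l"
    and "CARD('n::finite) = 3 * CARD('a) div 4"
    and "CARD('k::finite) = CARD('a) div 4"
  shows "\<exists>(C1 :: ('a ^ 'n) set) (C2 :: ('a ^ 'n) set) (B :: 'a ^ 'k \<Rightarrow> ('a ^ 'n \<Rightarrow> complex)).
           vec.subspace C1 \<and> vec.subspace C2 \<and> dual_code C2 \<subseteq> C1 \<and>
           vec.dim C1 - vec.dim (dual_code C2) = CARD('k) \<and>
           (\<forall>v \<in> (C1 - dual_code C2) \<union> (C2 - dual_code C1).
              int (hweight v) \<ge> int (CARD('a) div 3) - int (CARD('a) div 4) + 1) \<and>
           (\<forall>x y. inner_st (B x) (B y) = (if x = y then 1 else 0)) \<and>
           css_space C1 C2 = {\<lambda>v. \<Sum>x\<in>UNIV. f x * B x v | f. True} \<and>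
           (\<forall>x y z. transversal_CCZ l (tensor3 (B x) (B y) (B z)) =
              (\<lambda>s. sign_of (ftr l (\<Sum>i\<in>UNIV. x $ i * y $ i * z $ i)) * tensor3 (B x) (B y) (B z) s))"
  proof -
  obtain t where t: "t \<ge> 1" "CARD('a) = 8 * t"
  proof -
    have "l = 3 + (l - 3)" using assms(1) by simp
    then have "(2::nat) ^ l = 2 ^ 3 * 2 ^ (l - 3)" by (metis power_add)
    then show ?thesis using that[of "2 ^ (l - 3)"] assms(2) by simp
  qed
  have "card (UNIV :: ('n + 'k) set) = CARD('a)"
  proof -
    have "card (UNIV :: ('n + 'k) set) = card (UNIV <+> (UNIV :: 'k set) :: ('n + 'k) set)" by simp
    also have "\<dots> = CARD('n) + CARD('k)" by (rule card_Plus) simp_all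
    also have "\<dots> = CARD('a)" using assms(3,4) t by auto
    finally show ?thesis .
  qed
  then obtain h :: "('n + 'k) \<Rightarrow> 'a" where "bij_betw h UNIV UNIV"
    using finite_same_card_bij[of "UNIV :: ('n + 'k) set" "UNIV :: 'a set"] by auto
  then have hb: "bij h" by (simp add: bij_def bij_betw_def)
  interpret c: cz h l "(CARD('a) - 2) div 3"
    by unfold_locales (use hb assms in auto)
  show ?thesis
    apply (rule exI[of _ c.C1], rule exI[of _ c.C2], rule exI[of _ c.BB])
    using c.subspace_C1 c.subspace_C2 c.D_sub_C1 c.D_dual c.dim_C1_D c.dist1 c.dist2 c.BB_orth c.css_eq c.ccz
    by auto
qed

end
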